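(* Let $H\ge1$, and for $h=1,\dots,H$ let $\boldsymbol{P}^h\in\mathbb{R}^{n\times n}$, $\boldsymbol{A}^h=\mathrm{softmax}(\boldsymbol{P}^h)$, and $\boldsymbol{W}_V^h,\boldsymbol{W}_O^h\in\mathbb{R}^{d\times d}$. Let $\alpha=\max_h\max_{i,j}\lvert\boldsymbol{P}^h_{ij}\rvert$, $\sigma_1=\max_h\lVert\boldsymbol{W}_V^h\rVert_2$, $\sigma_2=\max_h\lVert\boldsymbol{W}_O^h\rVert_2$. For $\boldsymbol{X}\in\mathbb{R}^{n\times d}$ define $\mathrm{MSA}(\boldsymbol{X})=\sum_{h=1}^H\boldsymbol{A}^h\boldsymbol{X}\boldsymbol{W}_V^h\boldsymbol{W}_O^h$. Then $$\lVert\mathrm{HC}[\mathrm{MSA}(\boldsymbol{X})]\rVert_F\le\sigma_1\sigma_2H\sqrt{\frac{ne^{2\alpha}}{e^{2\alpha}+n-1}}\;\lVert\mathrm{HC}[\boldsymbol{X}]\rVert_F.$$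
   Context: $\mathrm{softmax}$ is applied row-wise: $\mathrm{softmax}(\boldsymbol{P})_{ij}=e^{\boldsymbol{P}_{ij}}/\sum_t e^{\boldsymbol{P}_{it}}$. For $\boldsymbol{X}\in\mathbb{R}^{n\times d}$, $\mathrm{HC}[\boldsymbol{X}]=(\boldsymbol{I}-\frac1n\boldsymbol{1}\boldsymbol{1}^T)\boldsymbol{X}$ with $\boldsymbol{1}$ the all-ones vector. $\lVert\cdot\rVert_F$ is the Frobenius norm, $\lVert\cdot\rVert_2$ the spectral norm. *)

theory Defs
  imports "HOL-Analysis.Analysis"
begin

text \<open>Matrices are rendered as \<open>real^'c^'r\<close> (rows indexed by \<open>'r\<close>, columns by \<open>'c\<close>).\<close>

definition softmax :: "real^'m^'n \<Rightarrow> real^'m^'n" where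
  "softmax P = (\<chi> i j. exp (P $ i $ j) / (\<Sum>t\<in>UNIV. exp (P $ i $ t)))"

definition all_ones :: "real^'n" where
  "all_ones = (\<chi> i. 1)"

definition HC :: "real^'d^'n \<Rightarrow> real^'d^'n" where
  "HC X = (mat 1 - (1 / real CARD('n)) *\<^sub>R (\<chi> i j. (all_ones :: real^'n) $ i * (all_ones :: real^'n) $ j)) ** X"

definition frob_norm :: "real^'c^'r \<Rightarrow> real" where
  "frob_norm X = sqrt (\<Sum>i\<in>UNIV. \<Sum>j\<in>UNIV. (X $ i $ j)\<^sup>2)"

definition spec_norm :: "real^'c^'r \<Rightarrow> real" where
  "spec_norm W = onorm (\<lambda>x. W *v x)"

definition MSA :: "nat \<Rightarrow> (nat \<Rightarrow> real^'n^'n) \<Rightarrow> (nat \<Rightarrow> real^'d^'d) \<Rightarrow> (nat \<Rightarrow> real^'d^'d)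
                   \<Rightarrow> real^'d^'n \<Rightarrow> real^'d^'n" where
  "MSA H P WV WO X = (\<Sum>h\<in>{1..H}. softmax (P h) ** X ** WV h ** WO h)"

end

theory Submission
  imports Defs
begin

lemma frob_eq_norm: "frob_norm (X::real^'c^'r) = norm X"
  unfolding frob_norm_def norm_vec_def L2_set_def
  by (simp add: real_sqrt_pow2 sum_nonneg)

lemma norm_sq_sum: "(norm (X::real^'c^'r))^2 = (\<Sum>i\<in>UNIV. \<Sum>j\<in>UNIV. (X $ i $ j)\<^sup>2)"
  unfolding frob_eq_norm[symmetric] frob_norm_def
  by (simp add: sum_nonneg)

lemma vm_norm: "norm ((x::real^'r) v* (W::real^'c^'r)) \<le> spec_norm W * norm x"
proof -
  let ?y = "x v* W"
  have s: "0 \<le> spec_norm W" unfolding spec_norm_def by (rule onorm_pos_le) simp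
  have "(norm ?y)^2 = inner ?y ?y" by (simp add: power2_norm_eq_inner)
  also have "\<dots> = inner x (W *v ?y)" by (rule dot_lmul_matrix)
  also have "\<dots> \<le> norm x * norm (W *v ?y)" by (rule norm_cauchy_schwarz)
  also have "\<dots> \<le> norm x * (spec_norm W * norm ?y)"
    unfolding spec_norm_def
    by (rule mult_left_mono[OF onorm[OF matrix_vector_mul_bounded_linear]]) simp
  finally have h: "(norm ?y)^2 \<le> spec_norm W * norm x * norm ?y" by (simp add: ac_simps)
  show ?thesis
  proof (cases "norm ?y = 0")
    case True then show ?thesis using s by simp
  next
    case False
    then have "norm ?y > 0" by simp
    with h show ?thesis by (simp add: power2_eq_square)
  qed
qed

lemma mm_norm: "norm ((Y::real^'r^'n) ** (W::real^'c^'r)) \<le> spec_norm W * norm Y"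
proof -
  have s: "0 \<le> spec_norm W" unfolding spec_norm_def by (rule onorm_pos_le) simp
  have row: "(Y ** W) $ i = (Y $ i) v* W" for i
    by (simp add: matrix_matrix_mult_def vector_matrix_mult_def vec_eq_iff mult.commute)
  have "norm (Y ** W) = L2_set (\<lambda>i. norm ((Y $ i) v* W)) UNIV"
    unfolding norm_vec_def row by simp
  also have "\<dots> \<le> L2_set (\<lambda>i. spec_norm W * norm (Y $ i)) UNIV"
    by (rule L2_set_mono) (auto intro: vm_norm)
  also have "\<dots> = spec_norm W * norm Y"
    unfolding norm_vec_def using s by (simp add: L2_set_right_distrib)
  finally show ?thesis .
qed

lemma HC_entry: "HC (Y::real^'d^'n) $ i $ k = Y $ i $ k - (\<Sum>j\<in>UNIV. Y $ j $ k) / real CARD('n)"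
proof -
  have "HC Y $ i $ k = (\<Sum>j\<in>UNIV. (if i = j then Y $ j $ k else 0) - Y $ j $ k / real CARD('n))"
    unfolding HC_def matrix_matrix_mult_def mat_def all_ones_def
    by (auto intro!: sum.cong simp: algebra_simps divide_inverse)
  also have "\<dots> = Y $ i $ k - (\<Sum>j\<in>UNIV. Y $ j $ k) / real CARD('n)"
    by (simp add: sum_subtractf sum_divide_distrib)
  finally show ?thesis .
qed


lemma sq_expand: fixes y :: "'n::finite \<Rightarrow> real"
  shows "(\<Sum>i\<in>UNIV. (y i - c)\<^sup>2) = (\<Sum>i\<in>UNIV. (y i)\<^sup>2) - 2 * c * (\<Sum>i\<in>UNIV. y i) + real CARD('n) * c\<^sup>2"
proof -
  have "(\<Sum>i\<in>UNIV. (y i - c)\<^sup>2) = (\<Sum>i\<in>UNIV. (y i)\<^sup>2 - (2 * c) * y i + c\<^sup>2)"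
    by (intro sum.cong) (auto simp: power2_diff algebra_simps)
  also have "\<dots> = (\<Sum>i\<in>UNIV. (y i)\<^sup>2) - 2 * c * (\<Sum>i\<in>UNIV. y i) + real CARD('n) * c\<^sup>2"
    by (simp add: sum.distrib sum_subtractf sum_distrib_left[symmetric])
  finally show ?thesis .
qed

lemma col_center: fixes y :: "'n::finite \<Rightarrow> real"
  shows "(\<Sum>i\<in>UNIV. (y i - (\<Sum>j\<in>UNIV. y j) / real CARD('n))\<^sup>2) \<le> (\<Sum>i\<in>UNIV. (y i)\<^sup>2)"
proof -
  define S where "S = (\<Sum>j\<in>UNIV. y j)"
  define n where "n = real CARD('n)"
  have n: "n > 0" unfolding n_def by simp
  have "(\<Sum>i\<in>UNIV. (y i - S / n)\<^sup>2) = (\<Sum>i\<in>UNIV. (y i)\<^sup>2) - 2 * (S/n) * S + n * (S/n)\<^sup>2"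
    unfolding sq_expand S_def n_def ..
  also have "\<dots> = (\<Sum>i\<in>UNIV. (y i)\<^sup>2) - S\<^sup>2 / n"
    using n by (simp add: field_simps power2_eq_square)
  also have "\<dots> \<le> (\<Sum>i\<in>UNIV. (y i)\<^sup>2)" using n by simp
  finally show ?thesis unfolding S_def n_def .
qed

lemma HC_norm: "norm (HC (Y::real^'d^'n)) \<le> norm Y"
proof (rule power2_le_imp_le[OF _ norm_ge_zero])
  have "(norm (HC Y))\<^sup>2 = (\<Sum>k\<in>UNIV. \<Sum>i\<in>UNIV. (Y $ i $ k - (\<Sum>j\<in>UNIV. Y $ j $ k) / real CARD('n))\<^sup>2)"
    unfolding norm_sq_sum HC_entry by (rule sum.swap)
  also have "\<dots> \<le> (\<Sum>k\<in>UNIV. \<Sum>i\<in>UNIV. (Y $ i $ k)\<^sup>2)"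
    by (rule sum_mono) (rule col_center)
  also have "\<dots> = (norm Y)\<^sup>2" unfolding norm_sq_sum by (rule sum.swap)
  finally show "(norm (HC Y))\<^sup>2 \<le> (norm Y)\<^sup>2" .
qed

lemma HC_proj:
  assumes rs: "\<And>i. (\<Sum>j\<in>UNIV. A $ i $ j) = 1"
  shows "HC ((A::real^'n^'n) ** (X::real^'d^'n)) = HC (A ** HC X)"
proof -
  have e: "(A ** HC X) $ i $ k = (A ** X) $ i $ k - (\<Sum>j\<in>UNIV. X $ j $ k) / real CARD('n)" for i k
  proof -
    have "(A ** HC X) $ i $ k = (\<Sum>j\<in>UNIV. A $ i $ j * X $ j $ k) - (\<Sum>j\<in>UNIV. A $ i $ j) * ((\<Sum>j\<in>UNIV. X $ j $ k) / real CARD('n))"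
      unfolding matrix_matrix_mult_def HC_entry
      by (simp add: right_diff_distrib sum_subtractf sum_distrib_right sum_divide_distrib)
    then show ?thesis using rs by (simp add: matrix_matrix_mult_def)
  qed
  show ?thesis
  unfolding vec_eq_iff proof (intro allI)
    fix i k
    define m where "m = (\<Sum>j\<in>UNIV. X $ j $ k) / real CARD('n)"
    define n where "n = real CARD('n)"
    have n: "n > 0" unfolding n_def by simp
    have s: "(\<Sum>j\<in>UNIV. (A ** X) $ j $ k - m) = (\<Sum>j\<in>UNIV. (A ** X) $ j $ k) - n * m"
      by (simp add: sum_subtractf n_def)
    show "HC (A ** X) $ i $ k = HC (A ** HC X) $ i $ k"
      unfolding HC_entry e unfolding m_def[symmetric] unfolding s n_def[symmetric] using n
      by (simp add: field_simps)
  qed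
qed

lemma wjensen: fixes a z :: "'n::finite \<Rightarrow> real"
  assumes "\<And>j. a j \<ge> 0" "(\<Sum>j\<in>UNIV. a j) = 1"
  shows "(\<Sum>j\<in>UNIV. a j * z j)\<^sup>2 \<le> (\<Sum>j\<in>UNIV. a j * (z j)\<^sup>2)"
proof -
  define m where "m = (\<Sum>j\<in>UNIV. a j * z j)"
  have "0 \<le> (\<Sum>j\<in>UNIV. a j * (z j - m)\<^sup>2)"
    using assms by (intro sum_nonneg) simp
  also have "\<dots> = (\<Sum>j\<in>UNIV. a j * (z j)\<^sup>2 - (2 * m) * (a j * z j) + m\<^sup>2 * a j)"
    by (intro sum.cong) (auto simp: power2_diff algebra_simps)
  also have "\<dots> = (\<Sum>j\<in>UNIV. a j * (z j)\<^sup>2) - (2 * m) * m + m\<^sup>2 * (\<Sum>j\<in>UNIV. a j)"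
    unfolding m_def by (simp add: sum.distrib sum_subtractf sum_distrib_left[symmetric])
  finally show ?thesis using assms(2) unfolding m_def by (simp add: power2_eq_square)
qed

lemma stoch_norm:
  assumes nn: "\<And>i j. A $ i $ j \<ge> 0" and rs: "\<And>i. (\<Sum>j\<in>UNIV. A $ i $ j) = 1"
    and cs: "\<And>j. (\<Sum>i\<in>UNIV. A $ i $ j) \<le> c"
  shows "(norm ((A::real^'n^'n) ** (Z::real^'d^'n)))\<^sup>2 \<le> c * (norm Z)\<^sup>2"
proof -
  have "(norm (A ** Z))\<^sup>2 = (\<Sum>i\<in>UNIV. \<Sum>k\<in>UNIV. (\<Sum>j\<in>UNIV. A $ i $ j * Z $ j $ k)\<^sup>2)"
    unfolding norm_sq_sum by (simp add: matrix_matrix_mult_def)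
  also have "\<dots> \<le> (\<Sum>i\<in>UNIV. \<Sum>k\<in>UNIV. \<Sum>j\<in>UNIV. A $ i $ j * (Z $ j $ k)\<^sup>2)"
    by (intro sum_mono wjensen nn rs)
  also have "\<dots> = (\<Sum>k\<in>UNIV. \<Sum>i\<in>UNIV. \<Sum>j\<in>UNIV. A $ i $ j * (Z $ j $ k)\<^sup>2)"
    by (rule sum.swap)
  also have "\<dots> = (\<Sum>k\<in>UNIV. \<Sum>j\<in>UNIV. \<Sum>i\<in>UNIV. A $ i $ j * (Z $ j $ k)\<^sup>2)"
    by (intro sum.cong refl sum.swap)
  also have "\<dots> = (\<Sum>j\<in>UNIV. \<Sum>k\<in>UNIV. \<Sum>i\<in>UNIV. A $ i $ j * (Z $ j $ k)\<^sup>2)"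
    by (rule sum.swap)
  also have "\<dots> = (\<Sum>j\<in>UNIV. \<Sum>k\<in>UNIV. (\<Sum>i\<in>UNIV. A $ i $ j) * (Z $ j $ k)\<^sup>2)"
    by (simp only: sum_distrib_right)
  also have "\<dots> \<le> (\<Sum>j\<in>UNIV. \<Sum>k\<in>UNIV. c * (Z $ j $ k)\<^sup>2)"
    by (intro sum_mono mult_right_mono cs) simp
  also have "\<dots> = c * (norm Z)\<^sup>2"
    unfolding norm_sq_sum by (simp add: sum_distrib_left)
  finally show ?thesis .
qed


lemma sm_nonneg: "softmax (P::real^'n^'n) $ i $ j \<ge> 0"
  unfolding softmax_def by (simp add: sum_nonneg divide_nonneg_nonneg)

lemma sm_rowsum: "(\<Sum>j\<in>UNIV. softmax (P::real^'n^'n) $ i $ j) = 1"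
proof -
  have "(\<Sum>t\<in>UNIV. exp (P $ i $ t)) > 0" by (intro sum_pos) auto
  then show ?thesis unfolding softmax_def by (simp add: sum_divide_distrib[symmetric])
qed

lemma sm_bound:
  assumes b: "\<And>i j. \<bar>P $ i $ j\<bar> \<le> \<alpha>"
  shows "softmax (P::real^'n^'n) $ i $ j \<le> exp (2*\<alpha>) / (exp (2*\<alpha>) + real CARD('n) - 1)"
proof -
  define x where "x = exp (P $ i $ j)"
  define b where "b = (real CARD('n) - 1) * exp (- \<alpha>)"
  have x0: "x > 0" unfolding x_def by simp
  have xa: "x \<le> exp \<alpha>" unfolding x_def using b[of i j] by simp
  have c1: "real CARD('n) \<ge> 1" by (simp add: Suc_le_eq)
  have b0: "b \<ge> 0" unfolding b_def using c1 by simp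
  have "(\<Sum>t\<in>UNIV. exp (P $ i $ t)) = x + (\<Sum>t\<in>UNIV - {j}. exp (P $ i $ t))"
    unfolding x_def by (simp add: sum.remove[of UNIV j])
  moreover have "(\<Sum>t\<in>UNIV - {j}. exp (P $ i $ t)) \<ge> (\<Sum>t\<in>UNIV - {j}. exp (- \<alpha>))"
  proof (intro sum_mono)
    fix t show "exp (- \<alpha>) \<le> exp (P $ i $ t)" using b[of i t] by simp
  qed
  moreover have "(\<Sum>t\<in>UNIV - {j}. exp (- \<alpha>)) = b"
    unfolding b_def using c1 by (simp add: card_Diff_singleton of_nat_diff)
  ultimately have E: "(\<Sum>t\<in>UNIV. exp (P $ i $ t)) \<ge> x + b" by linarith
  have "softmax P $ i $ j = x / (\<Sum>t\<in>UNIV. exp (P $ i $ t))"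
    unfolding softmax_def x_def by simp
  also have "\<dots> \<le> x / (x + b)"
    using E x0 b0 by (intro divide_left_mono) auto
  also have "\<dots> \<le> exp \<alpha> / (exp \<alpha> + b)"
  proof -
    have p1: "x + b > 0" using x0 b0 by linarith
    have p2: "exp \<alpha> + b > 0" using b0 exp_gt_zero[of \<alpha>] by linarith
    have "x * b \<le> exp \<alpha> * b" using mult_right_mono[OF xa b0] .
    then have "x * (exp \<alpha> + b) \<le> exp \<alpha> * (x + b)" by (simp add: algebra_simps)
    then show ?thesis
      by (simp only: pos_divide_le_eq[OF p1] times_divide_eq_left pos_le_divide_eq[OF p2])
  qed
  also have "\<dots> = exp (2*\<alpha>) / (exp (2*\<alpha>) + real CARD('n) - 1)"
  proof -
    have e2: "exp (2*\<alpha>) = exp \<alpha> * exp \<alpha>" by (metis exp_add mult_2)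
    have h: "exp (-\<alpha>) * exp \<alpha> = 1" by (simp add: exp_minus)
    have "exp \<alpha> / (exp \<alpha> + b) = (exp \<alpha> * exp \<alpha>) / ((exp \<alpha> + b) * exp \<alpha>)" by simp
    also have "(exp \<alpha> + b) * exp \<alpha> = exp \<alpha> * exp \<alpha> + (real CARD('n) - 1) * (exp (-\<alpha>) * exp \<alpha>)"
      unfolding b_def by (simp only: distrib_right mult.assoc)
    also have "\<dots> = exp (2*\<alpha>) + real CARD('n) - 1" unfolding h e2 by simp
    finally show ?thesis unfolding e2 .
  qed
  finally show ?thesis .
qed

lemma HC_sum: "finite S \<Longrightarrow> HC (\<Sum>h\<in>S. f h) = (\<Sum>h\<in>S. HC (f h :: real^'d^'n))"
  by (induction S rule: finite_induct) (simp_all add: HC_def matrix_add_ldistrib)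

lemma HC_mul: "HC (Y ** W) = HC (Y::real^'d^'n) ** (W::real^'e^'d)"
  unfolding HC_def by (simp add: matrix_mul_assoc)


lemma head_bound:
  assumes b: "\<And>i j. \<bar>P $ i $ j\<bar> \<le> \<alpha>"
  shows "norm (HC (softmax (P::real^'n^'n) ** (X::real^'d^'n)))
     \<le> sqrt (real CARD('n) * exp (2 * \<alpha>) / (exp (2 * \<alpha>) + real CARD('n) - 1)) * norm (HC X)"
proof -
  let ?A = "softmax P"
  define q where "q = exp (2*\<alpha>) / (exp (2*\<alpha>) + real CARD('n) - 1)"
  have cs: "(\<Sum>i\<in>UNIV. ?A $ i $ j) \<le> real CARD('n) * q" for j
  proof -
    have "(\<Sum>i\<in>UNIV. ?A $ i $ j) \<le> (\<Sum>i\<in>(UNIV::'n set). q)"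
      unfolding q_def by (intro sum_mono sm_bound b)
    then show ?thesis by simp
  qed
  have c1: "real CARD('n) \<ge> 1" by (simp add: Suc_le_eq)
  have d0: "exp (2*\<alpha>) + real CARD('n) - 1 \<ge> 0" using c1 exp_gt_zero[of "2*\<alpha>"] by linarith
  have "norm (HC (?A ** X)) = norm (HC (?A ** HC X))" using HC_proj[OF sm_rowsum] by metis
  also have "\<dots> \<le> norm (?A ** HC X)" by (rule HC_norm)
  also have "\<dots> \<le> sqrt (real CARD('n) * q) * norm (HC X)"
  proof -
    have "(norm (?A ** HC X))\<^sup>2 \<le> (real CARD('n) * q) * (norm (HC X))\<^sup>2"
      by (rule stoch_norm[OF sm_nonneg sm_rowsum cs])
    then have "sqrt ((norm (?A ** HC X))\<^sup>2) \<le> sqrt ((real CARD('n) * q) * (norm (HC X))\<^sup>2)"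
      by (rule real_sqrt_le_mono)
    then show ?thesis by (simp add: real_sqrt_mult)
  qed
  finally show ?thesis unfolding q_def by (simp add: mult.assoc times_divide_eq_right)
qed

theorem proposition4:
  fixes H :: nat
    and P :: "nat \<Rightarrow> real^'n^'n"
    and WV WO :: "nat \<Rightarrow> real^'d^'d"
    and X :: "real^'d^'n"
    and \<alpha> \<sigma>\<^sub>1 \<sigma>\<^sub>2 :: real
  assumes "H \<ge> 1"
    and "\<alpha> = Max {\<bar>P h $ i $ j\<bar> | h i j. h \<in> {1..H}}"
    and "\<sigma>\<^sub>1 = Max {spec_norm (WV h) | h. h \<in> {1..H}}"
    and "\<sigma>\<^sub>2 = Max {spec_norm (WO h) | h. h \<in> {1..H}}"
  shows "frob_norm (HC (MSA H P WV WO X))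
           \<le> \<sigma>\<^sub>1 * \<sigma>\<^sub>2 * real H
             * sqrt (real CARD('n) * exp (2 * \<alpha>) / (exp (2 * \<alpha>) + real CARD('n) - 1))
             * frob_norm (HC X)"
proof -
  define c where "c = sqrt (real CARD('n) * exp (2 * \<alpha>) / (exp (2 * \<alpha>) + real CARD('n) - 1))"
  have c1: "real CARD('n) \<ge> 1" by (simp add: Suc_le_eq)
  have d0: "exp (2*\<alpha>) + real CARD('n) - 1 \<ge> 0" using c1 exp_gt_zero[of "2*\<alpha>"] by linarith
  have c0: "c \<ge> 0" unfolding c_def using d0 by simp
  have fin: "finite {\<bar>P h $ i $ j\<bar> | h i j. h \<in> {1..H}}"
  proof -
    have "{\<bar>P h $ i $ j\<bar> | h i j. h \<in> {1..H}} \<subseteq> (\<lambda>(h,i,j). \<bar>P h $ i $ j\<bar>) ` ({1..H} \<times> UNIV \<times> UNIV)"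
    proof clarify
      fix h i j assume "h \<in> {1..H}"
      then show "\<bar>P h $ i $ j\<bar> \<in> (\<lambda>(h,i,j). \<bar>P h $ i $ j\<bar>) ` ({1..H} \<times> UNIV \<times> UNIV)"
        by (intro image_eqI[of _ _ "(h,i,j)"]) auto
    qed
    then show ?thesis by (rule finite_subset) simp
  qed
  have al: "\<bar>P h $ i $ j\<bar> \<le> \<alpha>" if "h \<in> {1..H}" for h i j
    unfolding assms(2) using that by (intro Max_ge[OF fin]) blast
  have s1: "spec_norm (WV h) \<le> \<sigma>\<^sub>1" if "h \<in> {1..H}" for h
    unfolding assms(3) using that by (intro Max_ge) auto
  have s2: "spec_norm (WO h) \<le> \<sigma>\<^sub>2" if "h \<in> {1..H}" for h
    unfolding assms(4) using that by (intro Max_ge) auto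
  have sp0: "spec_norm (W::real^'d^'d) \<ge> 0" for W
    unfolding spec_norm_def by (rule onorm_pos_le) simp
  have "norm (HC (MSA H P WV WO X)) = norm (\<Sum>h\<in>{1..H}. HC (softmax (P h) ** X) ** WV h ** WO h)"
    unfolding MSA_def by (simp add: HC_sum HC_mul)
  also have "\<dots> \<le> (\<Sum>h\<in>{1..H}. norm (HC (softmax (P h) ** X) ** WV h ** WO h))"
    by (rule norm_sum)
  also have "\<dots> \<le> (\<Sum>h\<in>{1..H}. \<sigma>\<^sub>1 * \<sigma>\<^sub>2 * c * norm (HC X))"
  proof (rule sum_mono)
    fix h assume h: "h \<in> {1..H}"
    have "norm (HC (softmax (P h) ** X) ** WV h ** WO h)
        \<le> spec_norm (WO h) * (spec_norm (WV h) * norm (HC (softmax (P h) ** X)))"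
      by (rule order_trans[OF mm_norm mult_left_mono[OF mm_norm sp0]])
    also have "\<dots> \<le> \<sigma>\<^sub>2 * (\<sigma>\<^sub>1 * (c * norm (HC X)))"
      using head_bound[of "P h" \<alpha> X] al[OF h] s1[OF h] s2[OF h] sp0 c0
      unfolding c_def[symmetric]
      by (intro mult_mono) (auto intro: order_trans[OF sp0])
    finally show "norm (HC (softmax (P h) ** X) ** WV h ** WO h) \<le> \<sigma>\<^sub>1 * \<sigma>\<^sub>2 * c * norm (HC X)"
      by (simp add: ac_simps)
  qed
  also have "\<dots> = \<sigma>\<^sub>1 * \<sigma>\<^sub>2 * real H * c * norm (HC X)" by simp
  finally show ?thesis unfolding frob_eq_norm c_def .
qed

end
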